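(* Let $P_X$ be a probability distribution on a context space $\mathcal{X}$, let $\mathcal{A}$ be a finite action set, and let $\pi_0,\pi_\theta$ be policies with $\pi_0(a|x)>0$ for all $(x,a)$. Let $f_r:\mathcal{X}\times\mathcal{A}\to[c,b]$ be a measurable reward function with $b\ge 0$, and set $w(a,x)=\pi_\theta(a|x)/\pi_0(a|x)$. Suppose that the random variable $w(A,X)f_r^2(A,X)$ is $\sigma$-sub-Gaussian both when $(X,A)\sim P_X\otimes\pi_0(A|X)$ and when $(X,A)\sim P_X\otimes\pi_\theta(A|X)$. Then $$\operatorname{Var}\bigl(w(A,X)f_r(A,X)\bigr)\le \sqrt{2\sigma^2\min\bigl(D(\pi_\theta\|\pi_0),D_r(\pi_\theta\|\pi_0)\bigr)}+b_u^2-c_l^2,$$ where $c_l=\max(c,0)$, $b_u=\max(|c|,b)$, and the variance is taken under $(X,A)\sim P_X\otimes\pi_0(A|X)$.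
   Context: A policy is a conditional distribution $\pi(a|x)$ over $\mathcal{A}$ given $x\in\mathcal{X}$; $P_X\otimes\pi(A|X)$ denotes the joint law of $(X,A)$ with $X\sim P_X$, $A|X=x\sim\pi(\cdot|x)$. The true risk is $R(\pi)=\mathbb{E}_{P_X}[\mathbb{E}_{\pi(A|X)}[f_r(X,A)]]$. The variance is $\operatorname{Var}(w f_r)=\mathbb{E}_{P_X\otimes\pi_0}[(w(A,X)f_r(A,X))^2]-R^2(\pi_\theta)$ (note $\mathbb{E}_{P_X\otimes\pi_0}[w f_r]=R(\pi_\theta)$). Conditional KL: $D(\pi_\theta\|\pi_0)=D(\pi_\theta(A|X)\|\pi_0(A|X)|P_X)=\int_{\mathcal{X}} D(\pi_\theta(\cdot|x)\|\pi_0(\cdot|x))\,dP_X(x)$, and reverse conditional KL $D_r(\pi_\theta\|\pi_0)=D(\pi_0(A|X)\|\pi_\theta(A|X)|P_X)$, where $D(P\|Q)=\int\log\frac{dP}{dQ}dP$ (or $+\infty$ if $P\not\ll Q$). A random variable $Y$ is $\sigma$-sub-Gaussian if $\mathbb{E}[e^{\gamma(Y-\mathbb{E}Y)}]\le e^{\gamma^2\sigma^2/2}$ for all $\gamma\in\mathbb{R}$. *)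

theory Defs
  imports "HOL-Probability.Probability"
begin

definition is_policy :: "'x measure \<Rightarrow> 'a set \<Rightarrow> ('x \<Rightarrow> 'a \<Rightarrow> real) \<Rightarrow> bool" where
  "is_policy PX A pol \<longleftrightarrow>
     (\<forall>a\<in>A. (\<lambda>x. pol x a) \<in> borel_measurable PX) \<and>
     (\<forall>x\<in>space PX. (\<forall>a\<in>A. 0 \<le> pol x a) \<and> (\<Sum>a\<in>A. pol x a) = 1)"

definition joint :: "'x measure \<Rightarrow> 'a set \<Rightarrow> ('x \<Rightarrow> 'a \<Rightarrow> real) \<Rightarrow> ('x \<times> 'a) measure" where
  "joint PX A pol = density (PX \<Otimes>\<^sub>M count_space A) (\<lambda>(x, a). ennreal (pol x a))"

text \<open>KL divergence D(p || q) of two distributions on the finite set A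
  (0 log 0 = 0; +infinity if p is not absolutely continuous w.r.t. q).\<close>
definition kl_fin :: "'a set \<Rightarrow> ('a \<Rightarrow> real) \<Rightarrow> ('a \<Rightarrow> real) \<Rightarrow> ennreal" where
  "kl_fin A p q =
     (if \<forall>a\<in>A. q a = 0 \<longrightarrow> p a = 0
      then ennreal (\<Sum>a\<in>A. if p a = 0 then 0 else p a * ln (p a / q a))
      else \<infinity>)"

definition cond_KL :: "'x measure \<Rightarrow> 'a set \<Rightarrow> ('x \<Rightarrow> 'a \<Rightarrow> real) \<Rightarrow> ('x \<Rightarrow> 'a \<Rightarrow> real) \<Rightarrow> ennreal" where
  "cond_KL PX A p q = (\<integral>\<^sup>+ x. kl_fin A (p x) (q x) \<partial>PX)"

definition sub_gaussian :: "'b measure \<Rightarrow> ('b \<Rightarrow> real) \<Rightarrow> real \<Rightarrow> bool" where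
  "sub_gaussian M Y \<sigma> \<longleftrightarrow> integrable M Y \<and>
     (\<forall>\<gamma>::real. integrable M (\<lambda>z. exp (\<gamma> * (Y z - (\<integral>z. Y z \<partial>M)))) \<and>
        (\<integral>z. exp (\<gamma> * (Y z - (\<integral>z. Y z \<partial>M))) \<partial>M) \<le> exp (\<gamma>\<^sup>2 * \<sigma>\<^sup>2 / 2))"

end

theory Submission
  imports Defs
begin

lemma pol_meas:
  assumes "finite A" "is_policy PX A pol"
  shows "(\<lambda>z. pol (fst z) (snd z)) \<in> borel_measurable (PX \<Otimes>\<^sub>M count_space A)"
proof -
  have "(\<lambda>z. (\<lambda>a z. pol (fst z) a) (snd z) z) \<in> borel_measurable (PX \<Otimes>\<^sub>M count_space A)"
  proof (rule measurable_compose_countable'[where I=A])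
    fix a assume "a \<in> A"
    then have "(\<lambda>x. pol x a) \<in> borel_measurable PX" using assms(2) by (auto simp: is_policy_def)
    then show "(\<lambda>z. pol (fst z) a) \<in> borel_measurable (PX \<Otimes>\<^sub>M count_space A)"
      by (rule measurable_compose[OF measurable_fst])
  qed (auto simp: assms(1) countable_finite)
  then show ?thesis by simp
qed

lemma sec_meas:
  assumes "h \<in> borel_measurable (PX \<Otimes>\<^sub>M count_space A)" "a \<in> A"
  shows "(\<lambda>x. h (x, a)) \<in> borel_measurable PX"
  by (rule measurable_compose[OF measurable_Pair2' assms(1)]) (simp add: assms(2))

lemma prod_nn:
  assumes "finite A" "k \<in> borel_measurable (PX \<Otimes>\<^sub>M count_space A)"
  shows "(\<integral>\<^sup>+z. k z \<partial>(PX \<Otimes>\<^sub>M count_space A)) = (\<integral>\<^sup>+x. (\<Sum>a\<in>A. k (x,a)) \<partial>PX)"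
proof -
  interpret sigma_finite_measure "count_space A"
    by (rule sigma_finite_measure_count_space_finite[OF assms(1)])
  show ?thesis using nn_integral_fst[OF assms(2)]
    by (simp add: nn_integral_count_space_finite[OF assms(1)])
qed

lemma prod_integrable:
  assumes "finite A" "h \<in> borel_measurable (PX \<Otimes>\<^sub>M count_space A)"
  shows "integrable (PX \<Otimes>\<^sub>M count_space A) (h :: _ \<Rightarrow> real) \<longleftrightarrow> (\<forall>a\<in>A. integrable PX (\<lambda>x. h (x,a)))"
proof -
  have ms: "\<And>a. a \<in> A \<Longrightarrow> (\<lambda>x. h (x, a)) \<in> borel_measurable PX"
    using sec_meas[OF assms(2)] .
  have "(\<integral>\<^sup>+z. ennreal (norm (h z)) \<partial>(PX \<Otimes>\<^sub>M count_space A))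
      = (\<integral>\<^sup>+x. (\<Sum>a\<in>A. ennreal (norm (h (x,a)))) \<partial>PX)"
    by (rule prod_nn[OF assms(1)]) (use assms(2) in measurable)
  also have "\<dots> = (\<Sum>a\<in>A. \<integral>\<^sup>+x. ennreal (norm (h (x,a))) \<partial>PX)"
    by (rule nn_integral_sum) (use ms in measurable)
  finally have eq: "(\<integral>\<^sup>+z. ennreal (norm (h z)) \<partial>(PX \<Otimes>\<^sub>M count_space A))
      = (\<Sum>a\<in>A. \<integral>\<^sup>+x. ennreal (norm (h (x,a))) \<partial>PX)" .
  show ?thesis
    unfolding integrable_iff_bounded eq using assms ms
    by (auto simp: ennreal_sum_less_top)
qed

lemma prod_integral:
  assumes "prob_space PX" "finite A" "integrable (PX \<Otimes>\<^sub>M count_space A) (h :: _ \<Rightarrow> real)"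
  shows "(\<integral>z. h z \<partial>(PX \<Otimes>\<^sub>M count_space A)) = (\<integral>x. (\<Sum>a\<in>A. h (x,a)) \<partial>PX)"
proof -
  interpret p: prob_space PX by fact
  interpret c: sigma_finite_measure "count_space A"
    by (rule sigma_finite_measure_count_space_finite[OF assms(2)])
  interpret pair_sigma_finite PX "count_space A" ..
  show ?thesis using integral_fst'[OF assms(3)]
    by (simp add: lebesgue_integral_count_space_finite[OF assms(2)])
qed

lemma joint_eq: "joint PX A pol = density (PX \<Otimes>\<^sub>M count_space A) (\<lambda>z. ennreal (pol (fst z) (snd z)))"
  unfolding joint_def by (simp add: case_prod_beta')

lemma joint_integrable:
  assumes "finite A" "is_policy PX A pol" "g \<in> borel_measurable (PX \<Otimes>\<^sub>M count_space A)"
  shows "integrable (joint PX A pol) (g :: _ \<Rightarrow> real) \<longleftrightarrow> (\<forall>a\<in>A. integrable PX (\<lambda>x. pol x a * g (x,a)))"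
proof -
  note pm = pol_meas[OF assms(1,2)]
  have nn: "AE z in PX \<Otimes>\<^sub>M count_space A. 0 \<le> pol (fst z) (snd z)"
    using assms(2) by (intro AE_I2) (auto simp: space_pair_measure is_policy_def)
  show ?thesis unfolding joint_eq
    apply (subst integrable_density[OF assms(3) pm nn])
    apply (subst prod_integrable[OF assms(1)])
    using pm assms(3) by (auto intro!: borel_measurable_times)
qed

lemma joint_integral:
  assumes "prob_space PX" "finite A" "is_policy PX A pol" "integrable (joint PX A pol) (g :: _ \<Rightarrow> real)"
  shows "(\<integral>z. g z \<partial>joint PX A pol) = (\<integral>x. (\<Sum>a\<in>A. pol x a * g (x,a)) \<partial>PX)"
proof -
  note pm = pol_meas[OF assms(2,3)]
  have gm: "g \<in> borel_measurable (PX \<Otimes>\<^sub>M count_space A)"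
    using borel_measurable_integrable[OF assms(4)] by (simp add: joint_eq)
  have nn: "AE z in PX \<Otimes>\<^sub>M count_space A. 0 \<le> pol (fst z) (snd z)"
    using assms(3) by (intro AE_I2) (auto simp: space_pair_measure is_policy_def)
  have i2: "integrable (PX \<Otimes>\<^sub>M count_space A) (\<lambda>z. pol (fst z) (snd z) *\<^sub>R g z)"
    using assms(4) unfolding joint_eq by (subst (asm) integrable_density[OF gm pm nn])
  show ?thesis unfolding joint_eq
    apply (subst integral_density[OF gm pm nn])
    apply (subst prod_integral[OF assms(1,2) i2])
    by simp
qed

lemma joint_prob:
  assumes "prob_space PX" "finite A" "is_policy PX A pol"
  shows "prob_space (joint PX A pol)"
proof (rule prob_spaceI)
  interpret p: prob_space PX by fact
  note pm = pol_meas[OF assms(2,3)]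
  have pm2: "(\<lambda>z. ennreal (pol (fst z) (snd z))) \<in> borel_measurable (PX \<Otimes>\<^sub>M count_space A)"
    using pm by measurable
  have "emeasure (joint PX A pol) (space (joint PX A pol))
      = (\<integral>\<^sup>+z. ennreal (pol (fst z) (snd z)) * indicator (space (PX \<Otimes>\<^sub>M count_space A)) z \<partial>(PX \<Otimes>\<^sub>M count_space A))"
    unfolding joint_eq using pm2 by (subst emeasure_density) auto
  also have "\<dots> = (\<integral>\<^sup>+z. ennreal (pol (fst z) (snd z)) \<partial>(PX \<Otimes>\<^sub>M count_space A))"
    by (rule nn_integral_cong) (simp)
  also have "\<dots> = (\<integral>\<^sup>+x. (\<Sum>a\<in>A. ennreal (pol x a)) \<partial>PX)"
    by (subst prod_nn[OF assms(2)]) (use pm in auto)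
  also have "\<dots> = (\<integral>\<^sup>+x. 1 \<partial>PX)"
    using assms(3) by (intro nn_integral_cong) (auto simp: is_policy_def)
  also have "\<dots> = 1" by (simp add: p.emeasure_space_1)
  finally show "emeasure (joint PX A pol) (space (joint PX A pol)) = 1" .
qed

lemma opt_gamma:
  fixes \<Delta> d s :: real
  assumes s0: "s \<ge> 0" and H0: "\<And>\<gamma>. \<gamma> * \<Delta> \<le> d + \<gamma>\<^sup>2 * s / 2"
  shows "\<bar>\<Delta>\<bar> \<le> sqrt (2 * s * d)"
proof -
  define u where "u = \<bar>\<Delta>\<bar>"
  have H: "t * u \<le> d + t\<^sup>2 * s / 2" for t
  proof (cases "\<Delta> \<ge> 0")
    case True then show ?thesis using H0[of t] by (simp add: u_def)
  next
    case False then show ?thesis using H0[of "-t"] by (simp add: u_def)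
  qed
  have d0: "d \<ge> 0" using H[of 0] by simp
  show ?thesis
  proof (cases "u = 0")
    case True then show ?thesis using d0 s0 by (simp add: u_def)
  next
    case False
    then have u0: "u > 0" by (simp add: u_def)
    show ?thesis
    proof (cases "s = 0")
      case True
      have "(d+1)/u * u \<le> d" using H[of "(d+1)/u"] True by simp
      then show ?thesis using u0 by simp
    next
      case False
      then have sp: "s > 0" using s0 by simp
      have "u/s * u \<le> d + (u/s)\<^sup>2 * s / 2" by (rule H)
      then have "u^2 / s \<le> d + u^2 / 2 / s" using sp by (simp add: power2_eq_square field_simps)
      then have "u\<^sup>2 \<le> 2 * s * d" using sp by (simp add: field_simps)
      then show ?thesis unfolding u_def[symmetric] by (rule real_le_rsqrt)
    qed
  qed
qed

lemma pt_ineq: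
  fixes P Qv g c :: real
  assumes "0 \<le> P" "0 \<le> Qv" "P > 0 \<Longrightarrow> Qv > 0"
  shows "P*g - (if P = 0 then 0 else P * ln (P/Qv)) - P*c \<le> Qv * exp g / exp c - P"
proof (cases "P = 0")
  case True then show ?thesis using assms by simp
next
  case False
  then have P0: "P > 0" using assms by simp
  then have Q0: "Qv > 0" using assms by simp
  have lu: "ln (Qv * exp g / (P * exp c)) = ln Qv + g - ln P - c"
    using P0 Q0 by (simp add: ln_mult ln_div)
  have "P * ln (Qv * exp g / (P * exp c)) \<le> P * (Qv * exp g / (P * exp c) - 1)"
    by (rule mult_left_mono[OF ln_le_minus_one]) (use P0 Q0 in auto)
  then have h: "P * (ln Qv + g - ln P - c) \<le> P * (Qv * exp g / (P * exp c) - 1)" unfolding lu .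
  have r: "P * (Qv * exp g / (P * exp c) - 1) = Qv * exp g / exp c - P" using P0 by (simp add: field_simps)
  have l: "P * (ln Qv + g - ln P - c) = P*g - P * ln (P/Qv) - P*c" using P0 Q0 by (simp add: ln_div algebra_simps)
  show ?thesis using h False unfolding r l by simp
qed

lemma dv_bound:
  assumes PX: "prob_space PX" and fin: "finite A" and P: "is_policy PX A p" and Q: "is_policy PX A q"
    and Ym: "Y \<in> borel_measurable (PX \<Otimes>\<^sub>M count_space A)"
    and iP: "integrable (joint PX A p) Y"
    and sg: "sub_gaussian (joint PX A q) Y \<sigma>"
    and D: "cond_KL PX A p q \<noteq> \<infinity>"
  shows "\<bar>(\<integral>z. Y z \<partial>joint PX A p) - (\<integral>z. Y z \<partial>joint PX A q)\<bar>
          \<le> sqrt (2 * \<sigma>\<^sup>2 * enn2real (cond_KL PX A p q))"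
proof -
  interpret PX: prob_space PX by fact
  define m where "m = (\<integral>z. Y z \<partial>joint PX A q)"
  define S where "S x = (\<Sum>a\<in>A. if p x a = 0 then 0 else p x a * ln (p x a / q x a))" for x
  define K where "K x = max 0 (S x)" for x
  have pm: "\<And>a. a\<in>A \<Longrightarrow> (\<lambda>x. p x a) \<in> borel_measurable PX" using P by (auto simp: is_policy_def)
  have qm: "\<And>a. a\<in>A \<Longrightarrow> (\<lambda>x. q x a) \<in> borel_measurable PX" using Q by (auto simp: is_policy_def)
  have Sm: "S \<in> borel_measurable PX"
    unfolding S_def
    apply (rule borel_measurable_sum)
    subgoal premises prems for a
    proof -
      note [measurable] = pm[OF prems] qm[OF prems]
      show ?thesis by measurable
    qed
    done
  have Km: "K \<in> borel_measurable PX" unfolding K_def using Sm by measurable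
  have cp: "Measurable.pred PX (\<lambda>x. \<forall>a\<in>A. q x a = 0 \<longrightarrow> p x a = 0)"
    apply (rule pred_intros_finite(3)[OF fin, where M=PX and P="\<lambda>x a. q x a = 0 \<longrightarrow> p x a = 0"])
    subgoal premises prems for a
    proof -
      note [measurable] = pm[OF prems] qm[OF prems]
      show ?thesis by measurable
    qed
    done
  have kleq: "kl_fin A (p x) (q x) = (if (\<forall>a\<in>A. q x a = 0 \<longrightarrow> p x a = 0) then ennreal (S x) else \<infinity>)" for x
    by (simp add: kl_fin_def S_def)
  have klm: "(\<lambda>x. kl_fin A (p x) (q x)) \<in> borel_measurable PX"
    unfolding kleq using Sm cp by measurable
  have AEc: "AE x in PX. \<forall>a\<in>A. q x a = 0 \<longrightarrow> p x a = 0"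
  proof -
    have "AE x in PX. kl_fin A (p x) (q x) \<noteq> \<infinity>"
      using nn_integral_PInf_AE[OF klm] D unfolding cond_KL_def by simp
    then show ?thesis by eventually_elim (auto simp: kleq split: if_splits)
  qed
  have Deq: "cond_KL PX A p q = (\<integral>\<^sup>+x. ennreal (K x) \<partial>PX)"
    unfolding cond_KL_def using AEc
    by (intro nn_integral_cong_AE) (auto elim!: eventually_mono simp: kleq K_def ennreal_max_0)
  have K0: "AE x in PX. 0 \<le> K x" by (simp add: K_def)
  have Kint: "integrable PX K"
    by (rule integrableI_nonneg[OF Km K0]) (use D Deq in \<open>simp add: less_top\<close>)
  have KD: "(\<integral>x. K x \<partial>PX) = enn2real (cond_KL PX A p q)"
    using integral_eq_nn_integral[OF Km K0] Deq by simp
  have key: "\<gamma> * ((\<integral>z. Y z \<partial>joint PX A p) - m) \<le> enn2real (cond_KL PX A p q) + \<gamma>\<^sup>2 * \<sigma>\<^sup>2 / 2" for \<gamma>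
  proof -
    define c where "c = \<gamma>\<^sup>2 * \<sigma>\<^sup>2 / 2"
    define t where "t = exp c"
    define E where "E z = exp (\<gamma> * (Y z - m))" for z
    have iE: "integrable (joint PX A q) E" and Ele: "(\<integral>z. E z \<partial>joint PX A q) \<le> t"
      using sg unfolding sub_gaussian_def E_def t_def c_def m_def by auto
    have Em: "E \<in> borel_measurable (PX \<Otimes>\<^sub>M count_space A)" unfolding E_def using Ym by measurable
    have iqE: "\<forall>a\<in>A. integrable PX (\<lambda>x. q x a * E (x,a))"
      using joint_integrable[OF fin Q Em] iE by simp
    have EQ: "(\<integral>z. E z \<partial>joint PX A q) = (\<integral>x. (\<Sum>a\<in>A. q x a * E (x,a)) \<partial>PX)"
      by (rule joint_integral[OF PX fin Q iE])
    have ipY: "\<forall>a\<in>A. integrable PX (\<lambda>x. p x a * Y (x,a))"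
      using joint_integrable[OF fin P Ym] iP by simp
    have EP: "(\<integral>z. Y z \<partial>joint PX A p) = (\<integral>x. (\<Sum>a\<in>A. p x a * Y (x,a)) \<partial>PX)"
      by (rule joint_integral[OF PX fin P iP])
    have t0: "t > 0" by (simp add: t_def)
    have pw: "AE x in PX. \<gamma> * (\<Sum>a\<in>A. p x a * Y (x,a)) - \<gamma> * m
              \<le> K x + c + (\<Sum>a\<in>A. q x a * E (x,a)) / t - 1"
      using AEc AE_space[of PX]
    proof eventually_elim
      case (elim x)
      have p0: "\<And>a. a\<in>A \<Longrightarrow> 0 \<le> p x a" and ps: "(\<Sum>a\<in>A. p x a) = 1"
        using P elim(2) by (auto simp: is_policy_def)
      have q0: "\<And>a. a\<in>A \<Longrightarrow> 0 \<le> q x a" using Q elim(2) by (auto simp: is_policy_def)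
      have each: "p x a * (\<gamma> * (Y (x,a) - m)) - (if p x a = 0 then 0 else p x a * ln (p x a / q x a)) - p x a * c
            \<le> q x a * E (x,a) / t - p x a" if a: "a \<in> A" for a
        using pt_ineq[of "p x a" "q x a" "\<gamma> * (Y (x,a) - m)" c] p0[OF a] q0[OF a] elim(1) a
        by (auto simp: E_def t_def)
      have "(\<Sum>a\<in>A. p x a * (\<gamma> * (Y (x,a) - m)) - (if p x a = 0 then 0 else p x a * ln (p x a / q x a)) - p x a * c)
            \<le> (\<Sum>a\<in>A. q x a * E (x,a) / t - p x a)"
        by (rule sum_mono) (rule each)
      then have "(\<Sum>a\<in>A. p x a * (\<gamma> * (Y (x,a) - m))) - S x - c * (\<Sum>a\<in>A. p x a)
            \<le> (\<Sum>a\<in>A. q x a * E (x,a)) / t - (\<Sum>a\<in>A. p x a)"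
        by (simp add: sum_subtractf S_def sum_distrib_left sum_divide_distrib mult.commute)
      moreover have "(\<Sum>a\<in>A. p x a * (\<gamma> * (Y (x,a) - m))) = \<gamma> * (\<Sum>a\<in>A. p x a * Y (x,a)) - \<gamma> * m * (\<Sum>a\<in>A. p x a)"
        by (simp add: sum_distrib_left sum_subtractf algebra_simps)
      moreover have "S x \<le> K x" by (simp add: K_def)
      ultimately show ?case using ps by simp
    qed
    have iL: "integrable PX (\<lambda>x. \<gamma> * (\<Sum>a\<in>A. p x a * Y (x,a)) - \<gamma> * m)"
      using ipY by (auto intro!: integrable_diff integrable_mult_right integrable_sum)
    have iR: "integrable PX (\<lambda>x. K x + c + (\<Sum>a\<in>A. q x a * E (x,a)) / t - 1)"
      using iqE Kint by (auto intro!: integrable_diff integrable_add integrable_divide integrable_sum)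
    have "(\<integral>x. \<gamma> * (\<Sum>a\<in>A. p x a * Y (x,a)) - \<gamma> * m \<partial>PX)
          \<le> (\<integral>x. K x + c + (\<Sum>a\<in>A. q x a * E (x,a)) / t - 1 \<partial>PX)"
      by (rule integral_mono_AE[OF iL iR pw])
    also have "(\<integral>x. \<gamma> * (\<Sum>a\<in>A. p x a * Y (x,a)) - \<gamma> * m \<partial>PX)
          = \<gamma> * ((\<integral>z. Y z \<partial>joint PX A p) - m)"
    proof -
      have iS: "integrable PX (\<lambda>x. \<gamma> * (\<Sum>a\<in>A. p x a * Y (x,a)))"
        using ipY by (auto intro!: integrable_mult_right integrable_sum)
      have "(\<integral>x. \<gamma> * (\<Sum>a\<in>A. p x a * Y (x,a)) - \<gamma> * m \<partial>PX)
          = (\<integral>x. \<gamma> * (\<Sum>a\<in>A. p x a * Y (x,a)) \<partial>PX) - (\<integral>x. \<gamma> * m \<partial>PX)"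
        by (rule Bochner_Integration.integral_diff[OF iS]) simp
      then show ?thesis unfolding EP by (simp add: PX.prob_space right_diff_distrib)
    qed
    also have "(\<integral>x. K x + c + (\<Sum>a\<in>A. q x a * E (x,a)) / t - 1 \<partial>PX)
          = enn2real (cond_KL PX A p q) + c + (\<integral>z. E z \<partial>joint PX A q) / t - 1"
    proof -
      have i1: "integrable PX (\<lambda>x. (\<Sum>a\<in>A. q x a * E (x,a)) / t)"
        using iqE by (auto intro!: integrable_divide integrable_sum)
      have i2: "integrable PX (\<lambda>x. K x + c)" using Kint by auto
      have i3: "integrable PX (\<lambda>x. K x + c + (\<Sum>a\<in>A. q x a * E (x,a)) / t)"
        by (rule Bochner_Integration.integrable_add[OF i2 i1])
      have "(\<integral>x. K x + c + (\<Sum>a\<in>A. q x a * E (x,a)) / t - 1 \<partial>PX)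
         = (\<integral>x. K x + c + (\<Sum>a\<in>A. q x a * E (x,a)) / t \<partial>PX) - (\<integral>x. 1 \<partial>PX)"
        by (rule Bochner_Integration.integral_diff[OF i3]) simp
      also have "(\<integral>x. K x + c + (\<Sum>a\<in>A. q x a * E (x,a)) / t \<partial>PX)
         = (\<integral>x. K x + c \<partial>PX) + (\<integral>x. (\<Sum>a\<in>A. q x a * E (x,a)) / t \<partial>PX)"
        by (rule Bochner_Integration.integral_add[OF i2 i1])
      also have "(\<integral>x. K x + c \<partial>PX) = (\<integral>x. K x \<partial>PX) + (\<integral>x. c \<partial>PX)"
        by (rule Bochner_Integration.integral_add[OF Kint]) simp
      finally show ?thesis unfolding EQ KD by (simp add: PX.prob_space)
    qed
    also have "\<dots> \<le> enn2real (cond_KL PX A p q) + c"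
      using Ele t0 by (simp add: field_simps)
    finally show ?thesis by (simp add: c_def)
  qed
  have "\<bar>(\<integral>z. Y z \<partial>joint PX A p) - m\<bar> \<le> sqrt (2 * \<sigma>\<^sup>2 * enn2real (cond_KL PX A p q))"
    by (rule opt_gamma) (use key in \<open>auto simp: mult.assoc\<close>)
  then show ?thesis by (simp add: m_def)
qed

theorem proposition1:
  fixes PX :: "'x measure" and A :: "'a set"
    and \<pi>0 \<pi>\<theta> :: "'x \<Rightarrow> 'a \<Rightarrow> real"
    and f :: "'x \<times> 'a \<Rightarrow> real" and c b \<sigma> :: real
  assumes "prob_space PX"
    and "finite A"
    and "is_policy PX A \<pi>0" and "is_policy PX A \<pi>\<theta>"
    and "\<forall>x\<in>space PX. \<forall>a\<in>A. \<pi>0 x a > 0"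
    and "f \<in> borel_measurable (PX \<Otimes>\<^sub>M count_space A)"
    and "\<forall>z\<in>space PX \<times> A. c \<le> f z \<and> f z \<le> b"
    and "b \<ge> 0"
    and "sub_gaussian (joint PX A \<pi>0) (\<lambda>(x, a). \<pi>\<theta> x a / \<pi>0 x a * (f (x, a))\<^sup>2) \<sigma>"
    and "sub_gaussian (joint PX A \<pi>\<theta>) (\<lambda>(x, a). \<pi>\<theta> x a / \<pi>0 x a * (f (x, a))\<^sup>2) \<sigma>"
  shows "min (cond_KL PX A \<pi>\<theta> \<pi>0) (cond_KL PX A \<pi>0 \<pi>\<theta>) = \<infinity> \<or>
     (\<integral>z. ((\<lambda>(x, a). \<pi>\<theta> x a / \<pi>0 x a * f (x, a)) z
            - (\<integral>z. (\<lambda>(x, a). \<pi>\<theta> x a / \<pi>0 x a * f (x, a)) z \<partial>joint PX A \<pi>0))\<^sup>2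
        \<partial>joint PX A \<pi>0)
     \<le> sqrt (2 * \<sigma>\<^sup>2 * enn2real (min (cond_KL PX A \<pi>\<theta> \<pi>0) (cond_KL PX A \<pi>0 \<pi>\<theta>)))
        + (max \<bar>c\<bar> b)\<^sup>2 - (max c 0)\<^sup>2"
proof -
  note PX = assms(1) and fin = assms(2) and P0 = assms(3) and P1 = assms(4) and pos = assms(5)
    and fm = assms(6) and fb = assms(7) and b0 = assms(8) and sg0 = assms(9) and sg1 = assms(10)
  interpret PX: prob_space PX by fact
  define Z where "Z = (\<lambda>(x, a). \<pi>\<theta> x a / \<pi>0 x a * f (x, a))"
  define Y where "Y = (\<lambda>(x, a). \<pi>\<theta> x a / \<pi>0 x a * (f (x, a))\<^sup>2)"
  define J0 where "J0 = joint PX A \<pi>0"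
  define J1 where "J1 = joint PX A \<pi>\<theta>"
  define D1 where "D1 = cond_KL PX A \<pi>\<theta> \<pi>0"
  define D2 where "D2 = cond_KL PX A \<pi>0 \<pi>\<theta>"
  define Dm where "Dm = min D1 D2"
  define bu where "bu = max \<bar>c\<bar> b"
  define cl where "cl = max c 0"
  interpret J0: prob_space J0 unfolding J0_def by (rule joint_prob[OF PX fin P0])
  note m0 = pol_meas[OF fin P0] and m1 = pol_meas[OF fin P1]
  have Zm: "Z \<in> borel_measurable (PX \<Otimes>\<^sub>M count_space A)"
  proof -
    have "Z = (\<lambda>z. \<pi>\<theta> (fst z) (snd z) / \<pi>0 (fst z) (snd z) * f z)"
      by (auto simp: Z_def fun_eq_iff split: prod.splits)
    then show ?thesis using m0 m1 fm by simp
  qed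
  have Ym: "Y \<in> borel_measurable (PX \<Otimes>\<^sub>M count_space A)"
  proof -
    have "Y = (\<lambda>z. \<pi>\<theta> (fst z) (snd z) / \<pi>0 (fst z) (snd z) * (f z)\<^sup>2)"
      by (auto simp: Y_def fun_eq_iff split: prod.splits)
    then show ?thesis using m0 m1 fm by simp
  qed
  have fsec: "\<And>a. a \<in> A \<Longrightarrow> (\<lambda>x. f (x, a)) \<in> borel_measurable PX" using sec_meas[OF fm] .
  have p1m: "\<And>a. a \<in> A \<Longrightarrow> (\<lambda>x. \<pi>\<theta> x a) \<in> borel_measurable PX" using P1 by (auto simp: is_policy_def)
  have p1b: "0 \<le> \<pi>\<theta> x a \<and> \<pi>\<theta> x a \<le> 1" if "x \<in> space PX" "a \<in> A" for x a
  proof -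
    have "\<pi>\<theta> x a \<le> (\<Sum>a\<in>A. \<pi>\<theta> x a)"
      using P1 that fin by (intro member_le_sum) (auto simp: is_policy_def)
    then show ?thesis using P1 that by (auto simp: is_policy_def)
  qed
  have p1s: "(\<Sum>a\<in>A. \<pi>\<theta> x a) = 1" if "x \<in> space PX" for x using P1 that by (auto simp: is_policy_def)
  have bu0: "0 \<le> bu" by (simp add: bu_def)
  have fbu: "\<bar>f (x, a)\<bar> \<le> bu" if "x \<in> space PX" "a \<in> A" for x a
  proof -
    have "c \<le> f (x, a)" "f (x, a) \<le> b" using fb that by auto
    then show ?thesis unfolding bu_def by linarith
  qed
  have f2bu: "(f (x, a))\<^sup>2 \<le> bu\<^sup>2" if "x \<in> space PX" "a \<in> A" for x a
    using power_mono[OF fbu[OF that] abs_ge_zero, of 2] by simp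
  have eqZ: "\<pi>0 x a * Z (x, a) = \<pi>\<theta> x a * f (x, a)" if "x \<in> space PX" "a \<in> A" for x a
  proof -
    have "\<pi>0 x a > 0" using pos that by auto
    then show ?thesis by (simp add: Z_def)
  qed
  have eqZ2: "\<pi>0 x a * (Z (x, a))\<^sup>2 = \<pi>\<theta> x a * Y (x, a)" if "x \<in> space PX" "a \<in> A" for x a
  proof -
    have "\<pi>0 x a > 0" using pos that by auto
    then show ?thesis by (simp add: Z_def Y_def power2_eq_square)
  qed
  have eqY: "\<pi>0 x a * Y (x, a) = \<pi>\<theta> x a * (f (x, a))\<^sup>2" if "x \<in> space PX" "a \<in> A" for x a
  proof -
    have "\<pi>0 x a > 0" using pos that by auto
    then show ?thesis by (simp add: Y_def)
  qed
  have i1f: "integrable PX (\<lambda>x. \<pi>\<theta> x a * f (x, a))" if a: "a \<in> A" for a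
  proof (rule PX.integrable_const_bound[where B=bu])
    show "AE x in PX. norm (\<pi>\<theta> x a * f (x, a)) \<le> bu"
    proof (rule AE_I2)
      fix x assume x: "x \<in> space PX"
      have "\<bar>\<pi>\<theta> x a\<bar> * \<bar>f (x, a)\<bar> \<le> 1 * bu"
        using p1b[OF x a] fbu[OF x a] by (intro mult_mono) auto
      then show "norm (\<pi>\<theta> x a * f (x, a)) \<le> bu" by (simp add: abs_mult)
    qed
    show "(\<lambda>x. \<pi>\<theta> x a * f (x, a)) \<in> borel_measurable PX" using p1m[OF a] fsec[OF a] by simp
  qed
  have i1f2: "integrable PX (\<lambda>x. \<pi>\<theta> x a * (f (x, a))\<^sup>2)" if a: "a \<in> A" for a
  proof (rule PX.integrable_const_bound[where B="bu\<^sup>2"])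
    show "AE x in PX. norm (\<pi>\<theta> x a * (f (x, a))\<^sup>2) \<le> bu\<^sup>2"
    proof (rule AE_I2)
      fix x assume x: "x \<in> space PX"
      have "\<bar>\<pi>\<theta> x a\<bar> * (f (x, a))\<^sup>2 \<le> 1 * bu\<^sup>2"
        using p1b[OF x a] f2bu[OF x a] by (intro mult_mono) auto
      then show "norm (\<pi>\<theta> x a * (f (x, a))\<^sup>2) \<le> bu\<^sup>2" by (simp add: abs_mult)
    qed
    show "(\<lambda>x. \<pi>\<theta> x a * (f (x, a))\<^sup>2) \<in> borel_measurable PX" using p1m[OF a] fsec[OF a] by simp
  qed
  have Zint: "integrable J0 Z"
    unfolding J0_def joint_integrable[OF fin P0 Zm]
  proof
    fix a assume a: "a \<in> A"
    show "integrable PX (\<lambda>x. \<pi>0 x a * Z (x, a))"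
    proof -
      have "integrable PX (\<lambda>x. \<pi>0 x a * Z (x, a)) \<longleftrightarrow> integrable PX (\<lambda>x. \<pi>\<theta> x a * f (x, a))"
        by (rule Bochner_Integration.integrable_cong) (auto simp: eqZ a)
      then show ?thesis using i1f[OF a] by simp
    qed
  qed
  define EZ where "EZ = (\<integral>z. Z z \<partial>J0)"
  have EZeq: "EZ = (\<integral>x. (\<Sum>a\<in>A. \<pi>\<theta> x a * f (x, a)) \<partial>PX)"
    unfolding EZ_def J0_def joint_integral[OF PX fin P0 Zint[unfolded J0_def]]
    by (rule Bochner_Integration.integral_cong) (auto simp: eqZ)
  have clEZ: "cl\<^sup>2 \<le> EZ\<^sup>2"
  proof (cases "c \<ge> 0")
    case True
    have "c \<le> EZ" unfolding EZeq
    proof (rule PX.integral_ge_const)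
      show "integrable PX (\<lambda>x. \<Sum>a\<in>A. \<pi>\<theta> x a * f (x, a))" using i1f by auto
      show "AE x in PX. c \<le> (\<Sum>a\<in>A. \<pi>\<theta> x a * f (x, a))"
      proof (rule AE_I2)
        fix x assume x: "x \<in> space PX"
        have "(\<Sum>a\<in>A. \<pi>\<theta> x a * c) \<le> (\<Sum>a\<in>A. \<pi>\<theta> x a * f (x, a))"
          using p1b[OF x] fb x by (intro sum_mono mult_left_mono) auto
        then show "c \<le> (\<Sum>a\<in>A. \<pi>\<theta> x a * f (x, a))" using p1s[OF x] by (simp add: sum_distrib_right[symmetric])
      qed
    qed
    then show ?thesis using True by (simp add: cl_def power_mono)
  qed (simp add: cl_def)
  have iY0: "integrable J0 Y" using sg0 unfolding sub_gaussian_def J0_def Y_def by simp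
  have iY1: "integrable J1 Y" using sg1 unfolding sub_gaussian_def J1_def Y_def by simp
  have E0Y: "(\<integral>z. Y z \<partial>J0) \<le> bu\<^sup>2"
  proof -
    have "(\<integral>z. Y z \<partial>J0) = (\<integral>x. (\<Sum>a\<in>A. \<pi>\<theta> x a * (f (x, a))\<^sup>2) \<partial>PX)"
      unfolding J0_def joint_integral[OF PX fin P0 iY0[unfolded J0_def]]
      by (rule Bochner_Integration.integral_cong) (auto simp: eqY)
    also have "\<dots> \<le> bu\<^sup>2"
    proof (rule PX.integral_le_const)
      show "integrable PX (\<lambda>x. \<Sum>a\<in>A. \<pi>\<theta> x a * (f (x, a))\<^sup>2)" using i1f2 by auto
      show "AE x in PX. (\<Sum>a\<in>A. \<pi>\<theta> x a * (f (x, a))\<^sup>2) \<le> bu\<^sup>2"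
      proof (rule AE_I2)
        fix x assume x: "x \<in> space PX"
        have "(\<Sum>a\<in>A. \<pi>\<theta> x a * (f (x, a))\<^sup>2) \<le> (\<Sum>a\<in>A. \<pi>\<theta> x a * bu\<^sup>2)"
          using p1b[OF x] f2bu[OF x] by (intro sum_mono mult_left_mono) auto
        then show "(\<Sum>a\<in>A. \<pi>\<theta> x a * (f (x, a))\<^sup>2) \<le> bu\<^sup>2" using p1s[OF x] by (simp add: sum_distrib_right[symmetric])
      qed
    qed
    finally show ?thesis .
  qed
  have main: "Dm = \<infinity> \<or> (\<integral>z. (Z z - EZ)\<^sup>2 \<partial>J0) \<le> sqrt (2 * \<sigma>\<^sup>2 * enn2real Dm) + bu\<^sup>2 - cl\<^sup>2"
  proof (cases "Dm = \<infinity>")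
    case True then show ?thesis by simp
  next
    case Dfin: False
    have key: "(\<integral>z. Y z \<partial>J1) - (\<integral>z. Y z \<partial>J0) \<le> sqrt (2 * \<sigma>\<^sup>2 * enn2real Dm)"
    proof (cases "D1 \<le> D2")
      case True
      then have "Dm = D1" by (simp add: Dm_def)
      then have "D1 \<noteq> \<infinity>" using Dfin by simp
      from dv_bound[OF PX fin P1 P0 Ym iY1[unfolded J1_def] sg0[folded Y_def] this[unfolded D1_def]]
      show ?thesis using \<open>Dm = D1\<close> unfolding J0_def J1_def D1_def by simp
    next
      case False
      then have "Dm = D2" by (simp add: Dm_def)
      then have "D2 \<noteq> \<infinity>" using Dfin by simp
      from dv_bound[OF PX fin P0 P1 Ym iY0[unfolded J0_def] sg1[folded Y_def] this[unfolded D2_def]]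
      show ?thesis using \<open>Dm = D2\<close> unfolding J0_def J1_def D2_def by simp
    qed
    have sq0: "0 \<le> sqrt (2 * \<sigma>\<^sup>2 * enn2real Dm)" by simp
    have cb: "cl\<^sup>2 \<le> bu\<^sup>2" by (rule power_mono) (auto simp: cl_def bu_def)
    show ?thesis
    proof (cases "integrable J0 (\<lambda>z. (Z z - EZ)\<^sup>2)")
      case False
      then have "(\<integral>z. (Z z - EZ)\<^sup>2 \<partial>J0) = 0" by (rule not_integrable_integral_eq)
      then show ?thesis using sq0 cb by (intro disjI2) linarith
    next
      case True
      have eq: "(\<lambda>z. (Z z)\<^sup>2) = (\<lambda>z. (Z z - EZ)\<^sup>2 + (2 * EZ * Z z - EZ\<^sup>2))"
        by (auto simp: fun_eq_iff power2_eq_square algebra_simps)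
      have Z2int: "integrable J0 (\<lambda>z. (Z z)\<^sup>2)"
        unfolding eq using True Zint by auto
      have var: "(\<integral>z. (Z z - EZ)\<^sup>2 \<partial>J0) = (\<integral>z. (Z z)\<^sup>2 \<partial>J0) - EZ\<^sup>2"
        unfolding EZ_def by (rule J0.variance_eq[OF Zint Z2int])
      have Z2m: "(\<lambda>z. (Z z)\<^sup>2) \<in> borel_measurable (PX \<Otimes>\<^sub>M count_space A)" using Zm by simp
      have "(\<integral>z. (Z z)\<^sup>2 \<partial>J0) = (\<integral>x. (\<Sum>a\<in>A. \<pi>0 x a * (Z (x, a))\<^sup>2) \<partial>PX)"
        unfolding J0_def by (rule joint_integral[OF PX fin P0 Z2int[unfolded J0_def]])
      also have "\<dots> = (\<integral>x. (\<Sum>a\<in>A. \<pi>\<theta> x a * Y (x, a)) \<partial>PX)"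
        by (rule Bochner_Integration.integral_cong) (auto simp: eqZ2)
      also have "\<dots> = (\<integral>z. Y z \<partial>J1)"
        unfolding J1_def by (rule joint_integral[OF PX fin P1 iY1[unfolded J1_def], symmetric])
      finally have "(\<integral>z. (Z z)\<^sup>2 \<partial>J0) = (\<integral>z. Y z \<partial>J1)" .
      then show ?thesis using var key E0Y clEZ by simp
    qed
  qed
  show ?thesis using main
    unfolding Z_def J0_def Dm_def D1_def D2_def bu_def cl_def EZ_def .
qed

end
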